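(* Let $G=(V,E)$ be a graph and $v\in V$. Then $v\in\mathrm{corona}(G)\setminus\mathrm{core}(G)$ if and only if either (1) $v\in V^-$ and $v$ is not isolated, or (2) $v\in V^0$, there exists a set $S\subseteq V\setminus\{v\}$ with $|S|=\gamma(G)$ that dominates $G-v$ and satisfies $S\cap N[v]\neq\emptyset$, and $\gamma(G_v+u)=\gamma(G)$.
   Context: All graphs are finite, simple and undirected. $N[v]$ is the closed neighborhood of $v$. $\gamma(G)$ is the domination number; a minimum dominating set (mds) is a dominating set of size $\gamma(G)$. $\mathrm{core}(G)$ is the set of vertices in every mds, $\mathrm{corona}(G)$ the set of vertices in at least one mds. $G-v$ is $G$ with $v$ deleted; $V^0=\{v:\gamma(G-v)=\gamma(G)\}$, $V^-=\{v:\gamma(G-v)<\gamma(G)\}$. $G_v+u$ is the graph obtained from $G$ by adding a new vertex $u$ and the single edge $uv$. A vertex is isolated if it has no neighbors. *)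

theory Defs
  imports Main
begin

definition graph :: "'a set \<Rightarrow> ('a \<Rightarrow> 'a \<Rightarrow> bool) \<Rightarrow> bool" where
  "graph V E \<longleftrightarrow> finite V \<and> (\<forall>x y. E x y \<longrightarrow> x \<in> V \<and> y \<in> V)
     \<and> (\<forall>x y. E x y \<longrightarrow> E y x) \<and> (\<forall>x. \<not> E x x)"

definition closed_nbhd :: "'a set \<Rightarrow> ('a \<Rightarrow> 'a \<Rightarrow> bool) \<Rightarrow> 'a \<Rightarrow> 'a set" where
  "closed_nbhd V E v = insert v {u \<in> V. E v u}"

definition dominates :: "'a set \<Rightarrow> ('a \<Rightarrow> 'a \<Rightarrow> bool) \<Rightarrow> 'a set \<Rightarrow> bool" where
  "dominates V E S \<longleftrightarrow> S \<subseteq> V \<and> (\<forall>x\<in>V. \<exists>s\<in>S. s = x \<or> E s x)"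

definition domination_number :: "'a set \<Rightarrow> ('a \<Rightarrow> 'a \<Rightarrow> bool) \<Rightarrow> nat" where
  "domination_number V E = Min {card S | S. dominates V E S}"

definition is_mds :: "'a set \<Rightarrow> ('a \<Rightarrow> 'a \<Rightarrow> bool) \<Rightarrow> 'a set \<Rightarrow> bool" where
  "is_mds V E S \<longleftrightarrow> dominates V E S \<and> card S = domination_number V E"

definition core :: "'a set \<Rightarrow> ('a \<Rightarrow> 'a \<Rightarrow> bool) \<Rightarrow> 'a set" where
  "core V E = {v \<in> V. \<forall>S. is_mds V E S \<longrightarrow> v \<in> S}"

definition corona :: "'a set \<Rightarrow> ('a \<Rightarrow> 'a \<Rightarrow> bool) \<Rightarrow> 'a set" where
  "corona V E = {v \<in> V. \<exists>S. is_mds V E S \<and> v \<in> S}"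

definition del_vertex_V :: "'a set \<Rightarrow> 'a \<Rightarrow> 'a set" where
  "del_vertex_V V v = V - {v}"

definition del_vertex_E :: "('a \<Rightarrow> 'a \<Rightarrow> bool) \<Rightarrow> 'a \<Rightarrow> 'a \<Rightarrow> 'a \<Rightarrow> bool" where
  "del_vertex_E E v = (\<lambda>x y. E x y \<and> x \<noteq> v \<and> y \<noteq> v)"

text \<open>G_v + u: add a new vertex u (represented by None) adjacent only to v;
  old vertices are embedded via Some.\<close>
definition pendant_V :: "'a set \<Rightarrow> 'a option set" where
  "pendant_V V = insert None (Some ` V)"

definition pendant_E :: "('a \<Rightarrow> 'a \<Rightarrow> bool) \<Rightarrow> 'a \<Rightarrow> 'a option \<Rightarrow> 'a option \<Rightarrow> bool" where
  "pendant_E E v = (\<lambda>x y. case (x, y) of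
      (Some a, Some b) \<Rightarrow> E a b
    | (None, Some b) \<Rightarrow> b = v
    | (Some a, None) \<Rightarrow> a = v
    | (None, None) \<Rightarrow> False)"

end

theory Submission
  imports Defs
begin

lemma dom_fin: "finite V \<Longrightarrow> finite {card S | S. dominates V E S}"
proof -
  assume f: "finite V"
  have "{card S | S. dominates V E S} \<subseteq> card ` Pow V" by (auto simp: dominates_def)
  thus ?thesis using f finite_subset by blast
qed

lemma gamma_le: "finite V \<Longrightarrow> dominates V E S \<Longrightarrow> domination_number V E \<le> card S"
  unfolding domination_number_def by (rule Min_le) (auto simp: dom_fin)

lemma gamma_ex: "finite V \<Longrightarrow> \<exists>S. dominates V E S \<and> card S = domination_number V E"
proof -
  assume f: "finite V"
  have "dominates V E V" by (auto simp: dominates_def)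
  hence "domination_number V E \<in> {card S | S. dominates V E S}"
    unfolding domination_number_def by (intro Min_in dom_fin f) auto
  thus ?thesis by auto
qed

lemma pend_lower:
  assumes f: "finite V" and vV: "v \<in> V" and D: "dominates (pendant_V V) (pendant_E E v) D"
  shows "\<exists>T. dominates V E T \<and> v \<in> T \<and> card T \<le> card D"
proof -
  define T where "T = insert v (the ` (D - {None, Some v}))"
  have Dsub: "D \<subseteq> pendant_V V" using D by (auto simp: dominates_def)
  have fD: "finite D" using Dsub f by (auto simp: pendant_V_def intro: finite_subset)
  have "None \<in> pendant_V V" by (simp add: pendant_V_def)
  then obtain s where s: "s \<in> D" "s = None \<or> pendant_E E v s None"
    using D by (auto simp: dominates_def)
  have hD: "None \<in> D \<or> Some v \<in> D"
    using s by (cases s) (auto simp: pendant_E_def)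
  have "D - {None, Some v} \<subset> D" using hD by auto
  hence lt: "card (D - {None, Some v}) < card D" by (rule psubset_card_mono[OF fD])
  have "card T \<le> Suc (card (the ` (D - {None, Some v})))"
    unfolding T_def by (simp add: card_insert_le_m1 fD card_insert_if)
  also have "\<dots> \<le> Suc (card (D - {None, Some v}))"
    using fD by (simp add: card_image_le)
  finally have c: "card T \<le> card D" using lt by simp
  have TV: "T \<subseteq> V"
  proof
    fix x assume "x \<in> T"
    then show "x \<in> V" unfolding T_def using Dsub vV by (auto simp: pendant_V_def)
  qed
  have "\<forall>x\<in>V. \<exists>t\<in>T. t = x \<or> E t x"
  proof
    fix x assume xV: "x \<in> V"
    hence "Some x \<in> pendant_V V" by (simp add: pendant_V_def)
    then obtain d where d: "d \<in> D" "d = Some x \<or> pendant_E E v d (Some x)"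
      using D by (auto simp: dominates_def)
    show "\<exists>t\<in>T. t = x \<or> E t x"
    proof (cases d)
      case None
      then show ?thesis using d by (auto simp: pendant_E_def T_def)
    next
      case (Some a)
      show ?thesis
      proof (cases "a = v")
        case True
        then show ?thesis using d Some by (auto simp: pendant_E_def T_def)
      next
        case False
        have "a \<in> T" unfolding T_def using d Some False
          by (auto intro!: image_eqI[where x="Some a"])
        then show ?thesis using d Some by (auto simp: pendant_E_def)
      qed
    qed
  qed
  hence "dominates V E T" using TV by (simp add: dominates_def)
  thus ?thesis using c by (auto simp: T_def)
qed

lemma pend_upper:
  assumes "dominates V E D" "v \<in> D"
  shows "dominates (pendant_V V) (pendant_E E v) (Some ` D)"
  using assms unfolding dominates_def pendant_V_def pendant_E_def
  by (auto split: option.split)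

theorem corollary1:
  fixes V :: "'a set" and E :: "'a \<Rightarrow> 'a \<Rightarrow> bool" and v :: 'a
  assumes "graph V E" and "v \<in> V"
  shows "v \<in> corona V E - core V E \<longleftrightarrow>
    ((domination_number (del_vertex_V V v) (del_vertex_E E v) < domination_number V E
        \<and> (\<exists>u. E v u))
     \<or> (domination_number (del_vertex_V V v) (del_vertex_E E v) = domination_number V E
        \<and> (\<exists>S. S \<subseteq> V - {v} \<and> card S = domination_number V E
              \<and> dominates (del_vertex_V V v) (del_vertex_E E v) S
              \<and> S \<inter> closed_nbhd V E v \<noteq> {})
        \<and> domination_number (pendant_V V) (pendant_E E v) = domination_number V E))"
proof -
  let ?g = "domination_number V E"
  let ?g' = "domination_number (del_vertex_V V v) (del_vertex_E E v)"
  let ?gp = "domination_number (pendant_V V) (pendant_E E v)"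
  have G: "finite V" "\<And>x y. E x y \<Longrightarrow> E y x" "\<And>x. \<not> E x x"
    "\<And>x y. E x y \<Longrightarrow> x \<in> V \<and> y \<in> V"
    using assms(1) by (auto simp: graph_def)
  have fV': "finite (del_vertex_V V v)" using G by (simp add: del_vertex_V_def)
  have fP: "finite (pendant_V V)" using G by (simp add: pendant_V_def)
  have fin_dom: "\<And>S. dominates V E S \<Longrightarrow> finite S"
    using G by (auto simp: dominates_def intro: finite_subset)
  have gp_ge: "?g \<le> ?gp"
  proof -
    obtain D where D: "dominates (pendant_V V) (pendant_E E v) D" "card D = ?gp"
      using gamma_ex[OF fP] by blast
    obtain T where "dominates V E T" "card T \<le> card D"
      using pend_lower[OF G(1) assms(2) D(1)] by blast
    thus ?thesis using gamma_le[OF G(1)] D(2) by fastforce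
  qed
  show ?thesis
  proof
    assume "v \<in> corona V E - core V E"
    then obtain D D2 where D: "is_mds V E D" "v \<in> D" and D2: "is_mds V E D2" "v \<notin> D2"
      by (auto simp: corona_def core_def)
    have D2d: "dominates V E D2" "card D2 = ?g" using D2 by (auto simp: is_mds_def)
    obtain s where s: "s \<in> D2" "E s v"
      using D2d(1) assms(2) D2(2) by (auto simp: dominates_def)
    have d2: "dominates (del_vertex_V V v) (del_vertex_E E v) D2"
    proof -
      have "\<forall>x\<in>V - {v}. \<exists>t\<in>D2. t = x \<or> E t x \<and> t \<noteq> v \<and> x \<noteq> v"
        using D2d(1) D2(2) by (fastforce simp: dominates_def)
      thus ?thesis using D2d(1) D2(2)
        by (auto simp: dominates_def del_vertex_V_def del_vertex_E_def)
    qed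
    have le: "?g' \<le> ?g" using gamma_le[OF fV' d2] D2d(2) by simp
    have gp: "?gp = ?g"
    proof -
      have "dominates (pendant_V V) (pendant_E E v) (Some ` D)"
        using pend_upper D by (auto simp: is_mds_def)
      hence "?gp \<le> card (Some ` D)" by (rule gamma_le[OF fP])
      also have "\<dots> = ?g" using D by (simp add: card_image is_mds_def)
      finally show ?thesis using gp_ge by simp
    qed
    show "(?g' < ?g \<and> (\<exists>u. E v u)) \<or> (?g' = ?g \<and> (\<exists>S. S \<subseteq> V - {v} \<and> card S = ?g
              \<and> dominates (del_vertex_V V v) (del_vertex_E E v) S
              \<and> S \<inter> closed_nbhd V E v \<noteq> {}) \<and> ?gp = ?g)"
    proof (cases "?g' < ?g")
      case True
      then show ?thesis using s G(2) by blast
    next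
      case False
      hence "?g' = ?g" using le by simp
      moreover have "D2 \<subseteq> V - {v}" using D2d(1) D2(2) by (auto simp: dominates_def)
      moreover have "s \<in> D2 \<inter> closed_nbhd V E v"
        using s G by (auto simp: closed_nbhd_def)
      ultimately show ?thesis using D2d d2 gp by blast
    qed
  next
    assume H: "(?g' < ?g \<and> (\<exists>u. E v u)) \<or> (?g' = ?g \<and> (\<exists>S. S \<subseteq> V - {v} \<and> card S = ?g
              \<and> dominates (del_vertex_V V v) (del_vertex_E E v) S
              \<and> S \<inter> closed_nbhd V E v \<noteq> {}) \<and> ?gp = ?g)"
    show "v \<in> corona V E - core V E"
    proof (cases "?g' < ?g \<and> (\<exists>u. E v u)")
      case True
      then obtain u where u: "E v u" by blast
      obtain D' where D': "dominates (del_vertex_V V v) (del_vertex_E E v) D'" "card D' = ?g'"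
        using gamma_ex[OF fV'] by blast
      have D'V: "D' \<subseteq> V - {v}" using D' by (auto simp: dominates_def del_vertex_V_def)
      have fD': "finite D'" using D'V G(1) by (auto intro: finite_subset)
      have dv: "dominates V E (insert v D')"
        using D'(1) D'V assms(2)
        by (fastforce simp: dominates_def del_vertex_V_def del_vertex_E_def)
      have du: "dominates V E (insert u D')"
        using D'(1) D'V G u
        by (fastforce simp: dominates_def del_vertex_V_def del_vertex_E_def)
      have c1: "card (insert v D') = Suc ?g'" using D'V fD' D'(2) by (subst card_insert_disjoint) auto
      have c2: "card (insert u D') \<le> Suc ?g'" using fD' D'(2) by (simp add: card_insert_le_m1 card_insert_if)
      have m1: "is_mds V E (insert v D')"
        using gamma_le[OF G(1) dv] c1 True dv by (simp add: is_mds_def)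
      have m2: "is_mds V E (insert u D')"
        using gamma_le[OF G(1) du] c2 True du by (simp add: is_mds_def)
      have "u \<noteq> v" using u G(3) by auto
      hence "v \<notin> insert u D'" using D'V by auto
      thus ?thesis using m1 m2 assms(2) by (auto simp: corona_def core_def)
    next
      case False
      with H obtain S where S: "S \<subseteq> V - {v}" "card S = ?g"
          "dominates (del_vertex_V V v) (del_vertex_E E v) S" "S \<inter> closed_nbhd V E v \<noteq> {}"
        and gp: "?gp = ?g" by blast
      obtain s where s: "s \<in> S" "E v s" using S(1,4) by (auto simp: closed_nbhd_def)
      have dS: "dominates V E S"
      proof -
        have "\<forall>x\<in>V. \<exists>t\<in>S. t = x \<or> E t x"
        proof
          fix x assume "x \<in> V"
          show "\<exists>t\<in>S. t = x \<or> E t x"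
          proof (cases "x = v")
            case True then show ?thesis using s G(2) by blast
          next
            case False then show ?thesis using S(3) \<open>x \<in> V\<close>
              by (fastforce simp: dominates_def del_vertex_V_def del_vertex_E_def)
          qed
        qed
        thus ?thesis using S(1) by (auto simp: dominates_def)
      qed
      have nc: "v \<notin> core V E" using dS S(1,2) by (auto simp: core_def is_mds_def)
      obtain D where D: "dominates (pendant_V V) (pendant_E E v) D" "card D = ?gp"
        using gamma_ex[OF fP] by blast
      obtain T where T: "dominates V E T" "v \<in> T" "card T \<le> card D"
        using pend_lower[OF G(1) assms(2) D(1)] by blast
      have "is_mds V E T" using gamma_le[OF G(1) T(1)] T D(2) gp by (simp add: is_mds_def)
      thus ?thesis using nc T(2) assms(2) by (auto simp: corona_def)
    qed
  qed
qed

end
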